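(* Let $\mathbb F$ be an algebraically closed field, let $S$ be a left noetherian domain which is an $\mathbb F$-algebra with trivial center (i.e. $Z(S)=\mathbb F$), and let $B=S[x]$ be the usual polynomial ring in one central variable $x$ over $S$. Let $I=Bf_1+\cdots+Bf_r$ be a left ideal of $B$, where each $f_i\neq 0$ is normal in $B$ (i.e. $Bf_i=f_iB$) and has leading coefficient $\mathrm{lc}(f_i)\in S^*$. If $V(I)=\emptyset$, then $I=B$.
   Context: $B=S[x]$ is regarded as a skew PBW extension of $S$ in one variable. For $z\in S$, $\langle z\rangle$ denotes the two-sided ideal of $B$ generated by $x-z$; $z$ is a root of $f\in B$ iff $f\in\langle z\rangle$. For a subset $T\subseteq B$, $V(T)=\{z\in S: f\in\langle z\rangle \text{ for all } f\in T\}$. $S^*$ denotes the group of units of $S$; $\mathrm{lc}(f)$ is the coefficient of the highest power of $x$ in $f$. *)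

theory Defs
  imports "HOL-Algebra.Algebraic_Closure" "HOL-Algebra.UnivPoly"
begin

definition nc_domain :: "('a, 'm) ring_scheme \<Rightarrow> bool" where
  "nc_domain R \<longleftrightarrow> ring R \<and> \<one>\<^bsub>R\<^esub> \<noteq> \<zero>\<^bsub>R\<^esub> \<and>
     (\<forall>a\<in>carrier R. \<forall>b\<in>carrier R. a \<otimes>\<^bsub>R\<^esub> b = \<zero>\<^bsub>R\<^esub> \<longrightarrow> a = \<zero>\<^bsub>R\<^esub> \<or> b = \<zero>\<^bsub>R\<^esub>)"

definition left_ideal :: "('a, 'm) ring_scheme \<Rightarrow> 'a set \<Rightarrow> bool" where
  "left_ideal R I \<longleftrightarrow> additive_subgroup I R \<and>
     (\<forall>a\<in>carrier R. \<forall>i\<in>I. a \<otimes>\<^bsub>R\<^esub> i \<in> I)"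

definition left_noetherian :: "('a, 'm) ring_scheme \<Rightarrow> bool" where
  "left_noetherian R \<longleftrightarrow>
     (\<forall>C :: nat \<Rightarrow> 'a set. (\<forall>n. left_ideal R (C n) \<and> C n \<subseteq> C (Suc n))
        \<longrightarrow> (\<exists>N. \<forall>n\<ge>N. C n = C N))"

definition center :: "('a, 'm) ring_scheme \<Rightarrow> 'a set" where
  "center R = {z \<in> carrier R. \<forall>a\<in>carrier R. z \<otimes>\<^bsub>R\<^esub> a = a \<otimes>\<^bsub>R\<^esub> z}"

definition left_gen :: "('a, 'm) ring_scheme \<Rightarrow> 'a list \<Rightarrow> 'a set" where
  "left_gen B fs = {finsum B (\<lambda>i. b i \<otimes>\<^bsub>B\<^esub> fs ! i) {..<length fs} | b.
                      b \<in> {..<length fs} \<rightarrow> carrier B}"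

definition normal_elem :: "('a, 'm) ring_scheme \<Rightarrow> 'a \<Rightarrow> bool" where
  "normal_elem B f \<longleftrightarrow> (\<lambda>b. b \<otimes>\<^bsub>B\<^esub> f) ` carrier B = (\<lambda>b. f \<otimes>\<^bsub>B\<^esub> b) ` carrier B"

(* The two-sided ideal <z> of S[x] generated by x - z *)
definition root_ideal :: "('a, 'm) ring_scheme \<Rightarrow> 'a \<Rightarrow> (nat \<Rightarrow> 'a) set" where
  "root_ideal R z = genideal (UP R)
     {monom (UP R) \<one>\<^bsub>R\<^esub> 1 \<ominus>\<^bsub>UP R\<^esub> monom (UP R) z 0}"

definition zero_set :: "('a, 'm) ring_scheme \<Rightarrow> (nat \<Rightarrow> 'a) set \<Rightarrow> 'a set" where
  "zero_set R T = {z \<in> carrier R. \<forall>f\<in>T. f \<in> root_ideal R z}"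

end

theory Submission
  imports Defs
begin


definition ZR :: "('a, 'm) ring_scheme \<Rightarrow> ('a, 'm) ring_scheme" where
  "ZR R = R\<lparr>carrier := center R\<rparr>"

lemma center_sub: "center R \<subseteq> carrier R" unfolding center_def by auto

lemma ZR_carrier[simp]: "carrier (ZR R) = center R" by (simp add: ZR_def)
lemma ZR_one[simp]: "\<one>\<^bsub>ZR R\<^esub> = \<one>\<^bsub>R\<^esub>" by (simp add: ZR_def)
lemma ZR_zero[simp]: "\<zero>\<^bsub>ZR R\<^esub> = \<zero>\<^bsub>R\<^esub>" by (simp add: ZR_def)
lemma ZR_add[simp]: "x \<oplus>\<^bsub>ZR R\<^esub> y = x \<oplus>\<^bsub>R\<^esub> y" by (simp add: ZR_def)
lemma ZR_mult[simp]: "x \<otimes>\<^bsub>ZR R\<^esub> y = x \<otimes>\<^bsub>R\<^esub> y" by (simp add: ZR_def)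

lemma up_ZR: "up (ZR R) = {p \<in> up R. \<forall>n. p n \<in> center R}"
  unfolding up_def using center_sub[of R] by (auto simp: Pi_def)

lemma finsum_ZR:
  assumes "ring R" "field (ZR R)" "finite A" "f \<in> A \<rightarrow> center R"
  shows "finsum (ZR R) f A = finsum R f A"
  using assms(3,4)
proof (induction A rule: finite_induct)
  case empty
  interpret R: ring R by fact
  interpret F: field "ZR R" by fact
  show ?case using F.finsum_empty R.finsum_empty by simp
next
  case (insert a A)
  interpret R: ring R by fact
  interpret F: field "ZR R" by fact
  have f1: "f \<in> A \<rightarrow> carrier (ZR R)" "f a \<in> carrier (ZR R)" using insert by auto
  have f2: "f \<in> A \<rightarrow> carrier R" "f a \<in> carrier R" using f1 center_sub[of R] by auto
  have "finsum (ZR R) f (insert a A) = f a \<oplus>\<^bsub>ZR R\<^esub> finsum (ZR R) f A"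
    using F.finsum_insert[OF insert(1,2) f1] .
  also have "\<dots> = f a \<oplus>\<^bsub>R\<^esub> finsum R f A" using insert by simp
  also have "\<dots> = finsum R f (insert a A)" using R.finsum_insert[OF insert(1,2) f2] by simp
  finally show ?case .
qed

lemma UP_ZR_carrier: "carrier (UP (ZR R)) = {p \<in> carrier (UP R). \<forall>n. p n \<in> center R}"
  by (simp add: UP_def up_ZR)

lemma UP_ZR_add: "p \<in> carrier (UP (ZR R)) \<Longrightarrow> q \<in> carrier (UP (ZR R)) \<Longrightarrow>
   p \<oplus>\<^bsub>UP (ZR R)\<^esub> q = p \<oplus>\<^bsub>UP R\<^esub> q"
  by (simp add: UP_def up_ZR)

lemma UP_ZR_mult:
  assumes "ring R" "field (ZR R)" "p \<in> carrier (UP (ZR R))" "q \<in> carrier (UP (ZR R))"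
  shows "p \<otimes>\<^bsub>UP (ZR R)\<^esub> q = p \<otimes>\<^bsub>UP R\<^esub> q"
proof -
  have pc: "\<forall>n. p n \<in> center R" "\<forall>n. q n \<in> center R" "p \<in> up R" "q \<in> up R"
    using assms(3,4) by (auto simp: UP_def up_ZR)
  have "\<And>n i. p i \<otimes>\<^bsub>R\<^esub> q (n - i) \<in> center R"
  proof -
    interpret F: field "ZR R" by fact
    fix n i show "p i \<otimes>\<^bsub>R\<^esub> q (n - i) \<in> center R"
      using F.m_closed[of "p i" "q (n-i)"] pc by simp
  qed
  hence "\<And>n. finsum (ZR R) (\<lambda>i. p i \<otimes>\<^bsub>R\<^esub> q (n - i)) {..n} = finsum R (\<lambda>i. p i \<otimes>\<^bsub>R\<^esub> q (n - i)) {..n}"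
    by (intro finsum_ZR[OF assms(1,2)]) auto
  thus ?thesis using assms(3,4) pc by (simp add: UP_def up_ZR)
qed

lemma UP_ZR_zero: "\<zero>\<^bsub>UP (ZR R)\<^esub> = \<zero>\<^bsub>UP R\<^esub>" unfolding UP_def by (simp only: up_ring.simps ring.simps ZR_zero)
lemma UP_ZR_one: "\<one>\<^bsub>UP (ZR R)\<^esub> = \<one>\<^bsub>UP R\<^esub>" unfolding UP_def by (simp only: up_ring.simps ring.simps monoid.simps ZR_zero ZR_one)
lemma UP_ZR_monom: "a \<in> center R \<Longrightarrow> monom (UP (ZR R)) a n = monom (UP R) a n"
  using center_sub[of R] by (auto simp: UP_def)
lemma UP_ZR_coeff: "p \<in> carrier (UP (ZR R)) \<Longrightarrow> coeff (UP (ZR R)) p = coeff (UP R) p"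
  by (auto simp: UP_def up_ZR)
lemma UP_ZR_deg: "p \<in> carrier (UP (ZR R)) \<Longrightarrow> deg (ZR R) p = deg R p"
  by (simp add: deg_def UP_ZR_coeff)

lemma UP_ZR_minus:
  assumes "ring R" "field (ZR R)" "p \<in> carrier (UP (ZR R))"
  shows "\<ominus>\<^bsub>UP (ZR R)\<^esub> p = \<ominus>\<^bsub>UP R\<^esub> p"
proof -
  interpret P: UP_ring R "UP R" using assms(1) by (simp add: UP_ring_def)
  interpret Q: UP_cring "ZR R" "UP (ZR R)"
    using assms(2) unfolding UP_cring_def by (meson cring.axioms domain.axioms(1) field.axioms(1) cring_def)
  have c: "\<ominus>\<^bsub>UP (ZR R)\<^esub> p \<in> carrier (UP (ZR R))" using assms(3) by simp
  have cs: "carrier (UP (ZR R)) \<subseteq> carrier (UP R)" by (auto simp: UP_ZR_carrier)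
  have "p \<oplus>\<^bsub>UP (ZR R)\<^esub> \<ominus>\<^bsub>UP (ZR R)\<^esub> p = \<zero>\<^bsub>UP (ZR R)\<^esub>" using assms(3) by (rule Q.P.r_neg)
  hence e: "p \<oplus>\<^bsub>UP R\<^esub> \<ominus>\<^bsub>UP (ZR R)\<^esub> p = \<zero>\<^bsub>UP R\<^esub>" using UP_ZR_add[OF assms(3) c] UP_ZR_zero by metis
  have pc: "p \<in> carrier (UP R)" "\<ominus>\<^bsub>UP (ZR R)\<^esub> p \<in> carrier (UP R)" using cs c assms(3) by auto
  have e': "\<ominus>\<^bsub>UP (ZR R)\<^esub> p \<oplus>\<^bsub>UP R\<^esub> p = \<zero>\<^bsub>UP R\<^esub>" using e P.P.a_comm[OF pc] by simp
  show ?thesis using P.P.minus_equality[OF e' pc] by simp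
qed



context ring begin

lemma LG_sub: "set fs \<subseteq> carrier R \<Longrightarrow> left_gen R fs \<subseteq> carrier R"
  unfolding left_gen_def
  by (auto intro!: finsum_closed simp: Pi_def subset_iff)

lemma LG_mem:
  assumes "set fs \<subseteq> carrier R" "f \<in> set fs"
  shows "f \<in> left_gen R fs"
proof -
  obtain j where j: "j < length fs" "fs ! j = f" using assms(2) by (auto simp: in_set_conv_nth)
  define b where "b = (\<lambda>i. if i = j then \<one> else \<zero>)"
  have fsc: "\<And>i. i < length fs \<Longrightarrow> fs ! i \<in> carrier R" using assms(1) by auto
  have "(\<Oplus>i\<in>{..<length fs}. b i \<otimes> fs ! i) = (\<Oplus>i\<in>{..<length fs}. if j = i then fs ! i else \<zero>)"
    by (rule finsum_cong) (auto simp: b_def fsc Pi_def simp_implies_def)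
  also have "\<dots> = fs ! j" using j fsc by (intro finsum_singleton) (auto simp: Pi_def)
  finally show ?thesis unfolding left_gen_def using j
    by (auto simp: b_def Pi_def intro!: exI[of _ b])
qed

lemma LG_zero:
  assumes "set fs \<subseteq> carrier R"
  shows "\<zero> \<in> left_gen R fs"
proof -
  have fsc: "\<And>i. i < length fs \<Longrightarrow> fs ! i \<in> carrier R" using assms(1) by auto
  have "(\<Oplus>i\<in>{..<length fs}. (\<lambda>i. \<zero>) i \<otimes> fs ! i) = (\<Oplus>i\<in>{..<length fs}. \<zero>)"
    by (rule finsum_cong) (auto simp: fsc Pi_def)
  also have "\<dots> = \<zero>" by simp
  finally show ?thesis unfolding left_gen_def by (auto intro!: exI[of _ "\<lambda>i. \<zero>"])
qed

lemma LG_add: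
  assumes "set fs \<subseteq> carrier R" "x \<in> left_gen R fs" "y \<in> left_gen R fs"
  shows "x \<oplus> y \<in> left_gen R fs"
proof -
  have fsc: "\<And>i. i < length fs \<Longrightarrow> fs ! i \<in> carrier R" using assms(1) by auto
  obtain b where b: "b \<in> {..<length fs} \<rightarrow> carrier R" "x = (\<Oplus>i\<in>{..<length fs}. b i \<otimes> fs ! i)"
    using assms(2) unfolding left_gen_def by auto
  obtain c where c: "c \<in> {..<length fs} \<rightarrow> carrier R" "y = (\<Oplus>i\<in>{..<length fs}. c i \<otimes> fs ! i)"
    using assms(3) unfolding left_gen_def by auto
  have "x \<oplus> y = (\<Oplus>i\<in>{..<length fs}. b i \<otimes> fs ! i \<oplus> c i \<otimes> fs ! i)"
    unfolding b c using b(1) c(1) fsc by (intro finsum_addf[symmetric]) (auto simp: Pi_def)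
  also have "\<dots> = (\<Oplus>i\<in>{..<length fs}. (b i \<oplus> c i) \<otimes> fs ! i)"
    using b(1) c(1) fsc by (intro finsum_cong) (auto simp: Pi_def l_distr)
  finally show ?thesis unfolding left_gen_def using b(1) c(1)
    by (auto simp: Pi_def intro!: exI[of _ "\<lambda>i. b i \<oplus> c i"])
qed

lemma LG_lmult:
  assumes "set fs \<subseteq> carrier R" "a \<in> carrier R" "x \<in> left_gen R fs"
  shows "a \<otimes> x \<in> left_gen R fs"
proof -
  have fsc: "\<And>i. i < length fs \<Longrightarrow> fs ! i \<in> carrier R" using assms(1) by auto
  obtain b where b: "b \<in> {..<length fs} \<rightarrow> carrier R" "x = (\<Oplus>i\<in>{..<length fs}. b i \<otimes> fs ! i)"
    using assms(3) unfolding left_gen_def by auto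
  have "a \<otimes> x = (\<Oplus>i\<in>{..<length fs}. a \<otimes> (b i \<otimes> fs ! i))"
    unfolding b using b(1) fsc assms(2) by (intro finsum_rdistr) (auto simp: Pi_def)
  also have "\<dots> = (\<Oplus>i\<in>{..<length fs}. (a \<otimes> b i) \<otimes> fs ! i)"
    using b(1) fsc assms(2) by (intro finsum_cong) (auto simp: Pi_def m_assoc)
  finally show ?thesis unfolding left_gen_def using b(1) assms(2)
    by (auto simp: Pi_def intro!: exI[of _ "\<lambda>i. a \<otimes> b i"])
qed

lemma finsum_in_subgroup:
  assumes "additive_subgroup J R" "finite A" "\<forall>i\<in>A. h i \<in> J"
  shows "finsum R h A \<in> J"
  using assms(2,3)
proof (induction A rule: finite_induct)
  case empty
  then show ?case using assms(1) additive_subgroup.zero_closed by simp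
next
  case (insert a A)
  have sub: "J \<subseteq> carrier R" using assms(1) additive_subgroup.a_subset by blast
  have "finsum R h (insert a A) = h a \<oplus> finsum R h A"
    using insert sub by (intro finsum_insert) (auto simp: Pi_def)
  then show ?case using insert assms(1) additive_subgroup.a_closed by fastforce
qed

lemma LG_ideal:
  assumes "ideal J R" "set fs \<subseteq> J"
  shows "left_gen R fs \<subseteq> J"
proof
  fix x assume "x \<in> left_gen R fs"
  then obtain b where b: "b \<in> {..<length fs} \<rightarrow> carrier R" "x = (\<Oplus>i\<in>{..<length fs}. b i \<otimes> fs ! i)"
    unfolding left_gen_def by auto
  have "\<forall>i\<in>{..<length fs}. b i \<otimes> fs ! i \<in> J"
    using b(1) assms by (auto intro!: ideal.I_l_closed)
  then show "x \<in> J" unfolding b(2) using assms(1)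
    by (intro finsum_in_subgroup) (auto simp: ideal_def)
qed

end


context UP_ring begin

lemma coeff_mult_top:
  assumes "p \<in> carrier P" "q \<in> carrier P"
  shows "up_ring.coeff P (p \<otimes>\<^bsub>P\<^esub> q) (deg R p + deg R q) = up_ring.coeff P p (deg R p) \<otimes> up_ring.coeff P q (deg R q)"
proof -
  let ?d = "deg R p" and ?m = "deg R q"
  have "up_ring.coeff P (p \<otimes>\<^bsub>P\<^esub> q) (?d + ?m) = (\<Oplus>i\<in>{..?d + ?m}. up_ring.coeff P p i \<otimes> up_ring.coeff P q (?d + ?m - i))"
    using assms by simp
  also have "\<dots> = (\<Oplus>i\<in>{..?d + ?m}. if ?d = i then up_ring.coeff P p i \<otimes> up_ring.coeff P q (?d + ?m - i) else \<zero>)"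
  proof -
    have pw: "up_ring.coeff P p i \<otimes> up_ring.coeff P q (?d + ?m - i) = (if ?d = i then up_ring.coeff P p i \<otimes> up_ring.coeff P q (?d + ?m - i) else \<zero>)" for i
    proof (cases "?d < i")
      case True thus ?thesis using assms by (simp add: deg_aboveD)
    next
      case False
      show ?thesis
      proof (cases "?d = i")
        case False
        hence "?m < ?d + ?m - i" using \<open>\<not> ?d < i\<close> by arith
        thus ?thesis using assms False by (simp add: deg_aboveD)
      next
        case True thus ?thesis by simp
      qed
    qed
    show ?thesis using assms pw by (intro R.finsum_cong) (auto simp: Pi_def simp_implies_def)
  qed
  also have "\<dots> = up_ring.coeff P p ?d \<otimes> up_ring.coeff P q ?m"
    using assms by (subst R.finsum_singleton) (auto simp: Pi_def)
  finally show ?thesis .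
qed

lemma coeff_mult_const_right:
  assumes "p \<in> carrier P" "c \<in> carrier R"
  shows "up_ring.coeff P (p \<otimes>\<^bsub>P\<^esub> up_ring.monom P c 0) n = up_ring.coeff P p n \<otimes> c"
proof -
  have "up_ring.coeff P (p \<otimes>\<^bsub>P\<^esub> up_ring.monom P c 0) n = (\<Oplus>i\<in>{..n}. up_ring.coeff P p i \<otimes> (if 0 = n - i then c else \<zero>))"
    using assms by simp
  also have "\<dots> = (\<Oplus>i\<in>{..n}. if n = i then up_ring.coeff P p i \<otimes> c else \<zero>)"
    using assms by (intro R.finsum_cong) (auto simp: Pi_def simp_implies_def)
  also have "\<dots> = up_ring.coeff P p n \<otimes> c"
    using assms by (subst R.finsum_singleton) (auto simp: Pi_def)
  finally show ?thesis .
qed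

lemma normal_central:
  assumes fP: "f \<in> carrier P" and nf: "normal_elem P f"
    and u: "up_ring.coeff P f (deg R f) \<in> Units R"
  shows "up_ring.coeff P f n \<otimes> inv (up_ring.coeff P f (deg R f)) \<in> center R"
proof -
  let ?u = "up_ring.coeff P f (deg R f)" and ?d = "deg R f"
  have uc: "?u \<in> carrier R" "inv ?u \<in> carrier R" "inv ?u \<otimes> ?u = \<one>" "?u \<otimes> inv ?u = \<one>"
    using u by auto
  have fnc: "\<And>n. up_ring.coeff P f n \<in> carrier R" using fP by simp
  have key: "a \<otimes> (up_ring.coeff P f n \<otimes> inv ?u) = (up_ring.coeff P f n \<otimes> inv ?u) \<otimes> a" if a: "a \<in> carrier R" for a n
  proof -
    have "up_ring.monom P a 0 \<otimes>\<^bsub>P\<^esub> f \<in> (\<lambda>b. f \<otimes>\<^bsub>P\<^esub> b) ` carrier P"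
      using nf a fP unfolding normal_elem_def by (metis image_eqI monom_closed)
    then obtain b where b: "b \<in> carrier P" "up_ring.monom P a 0 \<otimes>\<^bsub>P\<^esub> f = f \<otimes>\<^bsub>P\<^esub> b" by auto
    have db: "deg R b = 0"
    proof (rule ccontr)
      assume "deg R b \<noteq> 0"
      hence bnz: "up_ring.coeff P b (deg R b) \<noteq> \<zero>" using b(1) by (rule lcoeff_nonzero_deg)
      have "up_ring.coeff P (up_ring.monom P a 0 \<otimes>\<^bsub>P\<^esub> f) (?d + deg R b + 0) = a \<otimes> up_ring.coeff P f (?d + deg R b)"
        using coeff_monom_mult[OF a fP] .
      also have "\<dots> = \<zero>" using \<open>deg R b \<noteq> 0\<close> fP a by (simp add: deg_aboveD)
      finally have "?u \<otimes> up_ring.coeff P b (deg R b) = \<zero>"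
        using coeff_mult_top[OF fP b(1)] b(2) by simp
      hence "inv ?u \<otimes> (?u \<otimes> up_ring.coeff P b (deg R b)) = \<zero>" using uc by simp
      hence "up_ring.coeff P b (deg R b) = \<zero>" using uc b(1) by (simp add: R.m_assoc[symmetric])
      thus False using bnz by simp
    qed
    define c where "c = up_ring.coeff P b 0"
    have cc: "c \<in> carrier R" using b(1) c_def by simp
    have bm: "b = up_ring.monom P c 0" using deg_zero_impl_monom[OF b(1) db] c_def by simp
    have eq: "\<And>k. a \<otimes> up_ring.coeff P f k = up_ring.coeff P f k \<otimes> c"
    proof -
      fix k
      have "a \<otimes> up_ring.coeff P f k = up_ring.coeff P (up_ring.monom P a 0 \<otimes>\<^bsub>P\<^esub> f) (k + 0)"
        using coeff_monom_mult[OF a fP, of 0 k] by simp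
      also have "\<dots> = up_ring.coeff P f k \<otimes> c" using b(2) bm coeff_mult_const_right[OF fP cc] by simp
      finally show "a \<otimes> up_ring.coeff P f k = up_ring.coeff P f k \<otimes> c" .
    qed
    have cu: "c = inv ?u \<otimes> a \<otimes> ?u"
    proof -
      have "inv ?u \<otimes> a \<otimes> ?u = inv ?u \<otimes> (a \<otimes> ?u)" using uc a by (simp add: R.m_assoc)
      also have "\<dots> = inv ?u \<otimes> (?u \<otimes> c)" using eq by simp
      also have "\<dots> = c" using uc cc by (simp add: R.m_assoc[symmetric])
      finally show ?thesis by simp
    qed
    have "a \<otimes> (up_ring.coeff P f n \<otimes> inv ?u) = (a \<otimes> up_ring.coeff P f n) \<otimes> inv ?u"
      using a uc fnc by (simp add: R.m_assoc)
    also have "\<dots> = up_ring.coeff P f n \<otimes> (inv ?u \<otimes> a \<otimes> ?u) \<otimes> inv ?u" using eq cu by simp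
    also have "\<dots> = (up_ring.coeff P f n \<otimes> inv ?u) \<otimes> a \<otimes> (?u \<otimes> inv ?u)"
      using a uc fnc by (simp add: R.m_assoc)
    also have "\<dots> = (up_ring.coeff P f n \<otimes> inv ?u) \<otimes> a" using a uc fnc by simp
    finally show ?thesis .
  qed
  show ?thesis unfolding center_def using key fnc uc by auto
qed

end


fun lst :: "(nat \<Rightarrow> 'a) \<Rightarrow> nat \<Rightarrow> 'a list" where
  "lst h 0 = [h 0]"
| "lst h (Suc n) = h (Suc n) # lst h n"

lemma lst_length[simp]: "length (lst h n) = Suc n" by (induction n) auto
lemma lst_set: "set (lst h n) = h ` {..n}" by (induction n) (auto simp: atMost_Suc)
lemma lst_hd: "hd (lst h n) = h n" by (cases n) auto

lemma (in ring) lst_eval: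
  assumes "\<And>i. h i \<in> carrier R" "x \<in> carrier R"
  shows "ring.eval R (lst h n) x = (\<Oplus>i\<in>{..n}. h i \<otimes> x [^] i)"
proof (induction n)
  case 0 then show ?case using assms by simp
next
  case (Suc n)
  then show ?case using assms by (simp add: Pi_def)
qed

lemma (in algebraically_closed) root_exists:
  assumes p: "p \<in> carrier (UP L)" and dp: "deg L p > 0"
  shows "\<exists>x \<in> carrier L. UnivPoly.eval L L id x p = \<zero>"
proof -
  interpret U: UP_cring L "UP L" by unfold_locales
  define h where "h = up_ring.coeff (UP L) p"
  have hc: "\<And>i. h i \<in> carrier L" using p h_def by simp
  have pnz: "p \<noteq> \<zero>\<^bsub>UP L\<^esub>" using dp by auto
  have hd: "h (deg L p) \<noteq> \<zero>" using U.lcoeff_nonzero[OF pnz p] h_def by simp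
  define Q where "Q = lst h (deg L p)"
  have Qc: "Q \<in> carrier (poly_ring L)"
    unfolding Q_def univ_poly_def polynomial_def using hc hd
    by (auto simp: lst_set lst_hd)
  have "splitted Q" using roots_over_carrier Qc by blast
  hence "roots Q \<noteq> {#}" unfolding splitted_def Q_def using dp by auto
  then obtain x where "x \<in># roots Q" by blast
  hence x: "is_root Q x" using roots_mem_iff_is_root[OF Qc] by auto
  hence xc: "x \<in> carrier L" and ev: "ring.eval L Q x = \<zero>" by (auto simp: is_root_def)
  have "UnivPoly.eval L L id x p = (\<Oplus>i\<in>{..deg L p}. h i \<otimes> x [^] i)"
    using U.eval_on_carrier[OF p, of L id x] h_def by simp
  also have "\<dots> = ring.eval L Q x" unfolding Q_def using lst_eval[OF hc xc] by simp
  finally show ?thesis using ev xc by auto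
qed



lemma UP_ZR_smult: "a \<in> center R \<Longrightarrow> p \<in> carrier (UP (ZR R)) \<Longrightarrow>
   a \<odot>\<^bsub>UP (ZR R)\<^esub> p = a \<odot>\<^bsub>UP R\<^esub> p"
  using center_sub[of R] by (auto simp: UP_def up_ZR)

lemma coeff_UP_eq: "p \<in> carrier (UP R) \<Longrightarrow> up_ring.coeff (UP R) p = p"
  by (simp add: UP_def)

lemma center_comm: "z \<in> center R \<Longrightarrow> a \<in> carrier R \<Longrightarrow> z \<otimes>\<^bsub>R\<^esub> a = a \<otimes>\<^bsub>R\<^esub> z"
  unfolding center_def by auto

lemma normalize_gen:
  assumes R: "ring R" and fP: "f \<in> carrier (UP R)" and nf: "normal_elem (UP R) f"
    and u: "up_ring.coeff (UP R) f (deg R f) \<in> Units R"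
  shows "up_ring.monom (UP R) (inv\<^bsub>R\<^esub> (up_ring.coeff (UP R) f (deg R f))) 0 \<otimes>\<^bsub>UP R\<^esub> f \<in> carrier (UP (ZR R))"
    and "f = up_ring.monom (UP R) (up_ring.coeff (UP R) f (deg R f)) 0 \<otimes>\<^bsub>UP R\<^esub>
              (up_ring.monom (UP R) (inv\<^bsub>R\<^esub> (up_ring.coeff (UP R) f (deg R f))) 0 \<otimes>\<^bsub>UP R\<^esub> f)"
proof -
  interpret R: ring R by (rule R)
  interpret P: UP_ring R "UP R" using R by (simp add: UP_ring_def)
  let ?u = "up_ring.coeff (UP R) f (deg R f)"
  have uc: "?u \<in> carrier R" "inv\<^bsub>R\<^esub> ?u \<in> carrier R" "inv\<^bsub>R\<^esub> ?u \<otimes>\<^bsub>R\<^esub> ?u = \<one>\<^bsub>R\<^esub>" "?u \<otimes>\<^bsub>R\<^esub> inv\<^bsub>R\<^esub> ?u = \<one>\<^bsub>R\<^esub>"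
    using u by auto
  have fnc: "\<And>n. up_ring.coeff (UP R) f n \<in> carrier R" using fP by simp
  have cen: "\<And>n. up_ring.coeff (UP R) f n \<otimes>\<^bsub>R\<^esub> inv\<^bsub>R\<^esub> ?u \<in> center R"
    using P.normal_central[OF fP nf u] .
  have coef: "up_ring.coeff (UP R) (up_ring.monom (UP R) (inv\<^bsub>R\<^esub> ?u) 0 \<otimes>\<^bsub>UP R\<^esub> f) n \<in> center R" for n
  proof -
    let ?c = "up_ring.coeff (UP R) f n \<otimes>\<^bsub>R\<^esub> inv\<^bsub>R\<^esub> ?u"
    have cc: "?c \<in> carrier R" using subsetD[OF center_sub cen[of n]] .
    have e1: "up_ring.coeff (UP R) (up_ring.monom (UP R) (inv\<^bsub>R\<^esub> ?u) 0 \<otimes>\<^bsub>UP R\<^esub> f) n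
        = inv\<^bsub>R\<^esub> ?u \<otimes>\<^bsub>R\<^esub> up_ring.coeff (UP R) f n"
      using P.coeff_monom_mult[OF uc(2) fP, of 0 n] by (simp only: add_0_right)
    have e2: "up_ring.coeff (UP R) f n = ?c \<otimes>\<^bsub>R\<^esub> ?u"
      using uc fnc[of n] R.m_assoc[of "up_ring.coeff (UP R) f n" "inv\<^bsub>R\<^esub> ?u" ?u] by simp
    have e3: "inv\<^bsub>R\<^esub> ?u \<otimes>\<^bsub>R\<^esub> (?c \<otimes>\<^bsub>R\<^esub> ?u) = (inv\<^bsub>R\<^esub> ?u \<otimes>\<^bsub>R\<^esub> ?c) \<otimes>\<^bsub>R\<^esub> ?u"
      using uc cc R.m_assoc[of "inv\<^bsub>R\<^esub> ?u" ?c ?u] by simp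
    have e4: "inv\<^bsub>R\<^esub> ?u \<otimes>\<^bsub>R\<^esub> ?c = ?c \<otimes>\<^bsub>R\<^esub> inv\<^bsub>R\<^esub> ?u"
      using center_comm[OF cen[of n] uc(2)] by (rule sym)
    have e5: "?c \<otimes>\<^bsub>R\<^esub> inv\<^bsub>R\<^esub> ?u \<otimes>\<^bsub>R\<^esub> ?u = ?c"
      using uc cc R.m_assoc[of ?c "inv\<^bsub>R\<^esub> ?u" ?u] by simp
    have "up_ring.coeff (UP R) (up_ring.monom (UP R) (inv\<^bsub>R\<^esub> ?u) 0 \<otimes>\<^bsub>UP R\<^esub> f) n = ?c"
      unfolding e1 by (subst e2, subst e3, subst e4, rule e5)
    with cen[of n] show ?thesis by (simp only:)
  qed
  have gP: "up_ring.monom (UP R) (inv\<^bsub>R\<^esub> ?u) 0 \<otimes>\<^bsub>UP R\<^esub> f \<in> carrier (UP R)"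
    by (intro P.UP_mult_closed P.monom_closed uc(2) fP)
  show "up_ring.monom (UP R) (inv\<^bsub>R\<^esub> ?u) 0 \<otimes>\<^bsub>UP R\<^esub> f \<in> carrier (UP (ZR R))"
    unfolding UP_ZR_carrier using gP coef coeff_UP_eq[OF gP] by auto
  have m1: "up_ring.monom (UP R) ?u 0 \<in> carrier (UP R)" "up_ring.monom (UP R) (inv\<^bsub>R\<^esub> ?u) 0 \<in> carrier (UP R)"
    using uc by (intro P.monom_closed, simp)+
  have "up_ring.monom (UP R) ?u 0 \<otimes>\<^bsub>UP R\<^esub> (up_ring.monom (UP R) (inv\<^bsub>R\<^esub> ?u) 0 \<otimes>\<^bsub>UP R\<^esub> f)
      = (up_ring.monom (UP R) ?u 0 \<otimes>\<^bsub>UP R\<^esub> up_ring.monom (UP R) (inv\<^bsub>R\<^esub> ?u) 0) \<otimes>\<^bsub>UP R\<^esub> f"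
    using P.P.m_assoc[OF m1 fP] by (rule sym)
  also have "up_ring.monom (UP R) ?u 0 \<otimes>\<^bsub>UP R\<^esub> up_ring.monom (UP R) (inv\<^bsub>R\<^esub> ?u) 0 = \<one>\<^bsub>UP R\<^esub>"
    using P.monom_mult[OF uc(1,2), of 0 0] uc(4) P.monom_one by simp
  finally show "f = up_ring.monom (UP R) ?u 0 \<otimes>\<^bsub>UP R\<^esub> (up_ring.monom (UP R) (inv\<^bsub>R\<^esub> ?u) 0 \<otimes>\<^bsub>UP R\<^esub> f)"
    using P.P.l_one[OF fP] by simp
qed



theorem corollary4p23:
  fixes R :: "('a, 'm) ring_scheme" and fs :: "(nat \<Rightarrow> 'a) list"
  assumes dom: "nc_domain R"
    and noeth: "left_noetherian R"
    and center_F: "algebraically_closed (R\<lparr>carrier := center R\<rparr>)"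
    and fs_carrier: "set fs \<subseteq> carrier (UP R)"
    and fs_nonzero: "\<forall>f\<in>set fs. f \<noteq> \<zero>\<^bsub>UP R\<^esub>"
    and fs_normal: "\<forall>f\<in>set fs. normal_elem (UP R) f"
    and fs_lc: "\<forall>f\<in>set fs. coeff (UP R) f (deg R f) \<in> Units R"
    and V_empty: "zero_set R (left_gen (UP R) fs) = {}"
  shows "left_gen (UP R) fs = carrier (UP R)"
proof (rule ccontr)
  assume neq: "left_gen (UP R) fs \<noteq> carrier (UP R)"
  have Rr: "ring R" using dom unfolding nc_domain_def by simp
  interpret R: ring R by (rule Rr)
  interpret P: UP_ring R "UP R" using Rr by (simp add: UP_ring_def)
  have Fac: "algebraically_closed (ZR R)" using center_F by (simp add: ZR_def)
  interpret F: algebraically_closed "ZR R" by (rule Fac)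
  have Ff: "field (ZR R)" using algebraically_closed.axioms(1)[OF Fac] .
  interpret Q: UP_cring "ZR R" "UP (ZR R)"
    using Ff unfolding UP_cring_def by (meson cring.axioms domain.axioms(1) field.axioms(1) cring_def)
  let ?I = "left_gen (UP R) fs"
  have Isub: "?I \<subseteq> carrier (UP R)" using P.P.LG_sub[OF fs_carrier] .
  have CQ: "carrier (UP (ZR R)) \<subseteq> carrier (UP R)" by (auto simp: UP_ZR_carrier)
  have zs: "z \<in> zero_set R ?I" if z: "z \<in> carrier R" and sub: "set fs \<subseteq> root_ideal R z" for z
  proof -
    have gc: "{up_ring.monom (UP R) \<one>\<^bsub>R\<^esub> 1 \<ominus>\<^bsub>UP R\<^esub> up_ring.monom (UP R) z 0} \<subseteq> carrier (UP R)"
      using z by simp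
    have "ideal (root_ideal R z) (UP R)" unfolding root_ideal_def by (rule P.P.genideal_ideal[OF gc])
    hence "?I \<subseteq> root_ideal R z" using P.P.LG_ideal sub by blast
    thus ?thesis unfolding zero_set_def using z by blast
  qed
  have fs_ne: "fs \<noteq> []"
  proof
    assume "fs = []"
    hence "\<one>\<^bsub>R\<^esub> \<in> zero_set R ?I" using zs[of "\<one>\<^bsub>R\<^esub>"] by simp
    thus False using V_empty by simp
  qed
  define lc where "lc f = up_ring.coeff (UP R) f (deg R f)" for f
  define g where "g f = up_ring.monom (UP R) (inv\<^bsub>R\<^esub> (lc f)) 0 \<otimes>\<^bsub>UP R\<^esub> f" for f
  have fP: "f \<in> carrier (UP R)" if "f \<in> set fs" for f using that fs_carrier by blast
  have lcU: "lc f \<in> Units R" if "f \<in> set fs" for f using that fs_lc lc_def by simp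
  have gQ: "g f \<in> carrier (UP (ZR R))" if "f \<in> set fs" for f
    unfolding g_def lc_def using normalize_gen(1)[OF Rr fP[OF that]] that fs_normal fs_lc by blast
  have gf: "f = up_ring.monom (UP R) (lc f) 0 \<otimes>\<^bsub>UP R\<^esub> g f" if "f \<in> set fs" for f
    unfolding g_def lc_def using normalize_gen(2)[OF Rr fP[OF that]] that fs_normal fs_lc by blast
  have gI: "g f \<in> ?I" if "f \<in> set fs" for f
    unfolding g_def using P.P.LG_lmult[OF fs_carrier _ P.P.LG_mem[OF fs_carrier that]] lcU[OF that]
    by simp
  have gnz: "g f \<noteq> \<zero>\<^bsub>UP R\<^esub>" if "f \<in> set fs" for f
  proof
    assume "g f = \<zero>\<^bsub>UP R\<^esub>"
    hence "f = up_ring.monom (UP R) (lc f) 0 \<otimes>\<^bsub>UP R\<^esub> \<zero>\<^bsub>UP R\<^esub>" using gf[OF that] by simp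
    also have "\<dots> = \<zero>\<^bsub>UP R\<^esub>" using R.Units_closed[OF lcU[OF that]] by (intro P.P.r_null P.monom_closed)
    finally show False using fs_nonzero that by blast
  qed
  define D where "D = {p. p \<in> ?I \<and> p \<in> carrier (UP (ZR R)) \<and> p \<noteq> \<zero>\<^bsub>UP R\<^esub>}"
  have "hd fs \<in> set fs" using fs_ne by simp
  hence "g (hd fs) \<in> D" unfolding D_def using gI gQ gnz by blast
  then obtain h where hD: "h \<in> D" and hmin: "\<And>p. p \<in> D \<Longrightarrow> deg R h \<le> deg R p"
    using ex_has_least_nat[of "\<lambda>p. p \<in> D" "g (hd fs)" "deg R"] by blast
  have hI: "h \<in> ?I" and hQ: "h \<in> carrier (UP (ZR R))" and hnz: "h \<noteq> \<zero>\<^bsub>UP R\<^esub>"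
    using hD unfolding D_def by auto
  have hP: "h \<in> carrier (UP R)" using hQ CQ by blast
  have hnzQ: "h \<noteq> \<zero>\<^bsub>UP (ZR R)\<^esub>" using hnz UP_ZR_zero by metis
  have FU: "Units (ZR R) = center R - {\<zero>\<^bsub>R\<^esub>}" using field.field_Units[OF Ff] by simp
  have hdiv: "\<exists>w \<in> carrier (UP R). g f = w \<otimes>\<^bsub>UP R\<^esub> h" if fs: "f \<in> set fs" for f
  proof -
    have gfQ: "g f \<in> carrier (UP (ZR R))" using gQ[OF fs] .
    have gfP: "g f \<in> carrier (UP R)" using gfQ CQ by blast
    obtain q r k where q: "q \<in> carrier (UP (ZR R))" and r: "r \<in> carrier (UP (ZR R))"
      and eq: "(up_ring.coeff (UP (ZR R)) h (deg (ZR R) h)) [^]\<^bsub>ZR R\<^esub> (k::nat) \<odot>\<^bsub>UP (ZR R)\<^esub> g f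
                 = h \<otimes>\<^bsub>UP (ZR R)\<^esub> q \<oplus>\<^bsub>UP (ZR R)\<^esub> r"
      and rdeg: "r = \<zero>\<^bsub>UP (ZR R)\<^esub> \<or> deg (ZR R) r < deg (ZR R) h"
      using Q.long_div_theorem[OF hQ gfQ hnzQ] by blast
    define c where "c = (up_ring.coeff (UP (ZR R)) h (deg (ZR R) h)) [^]\<^bsub>ZR R\<^esub> k"
    have lcU': "up_ring.coeff (UP (ZR R)) h (deg (ZR R) h) \<in> Units (ZR R)"
      using Q.lcoeff_nonzero[OF hnzQ hQ] Q.coeff_closed[OF hQ] FU by simp
    have cU: "c \<in> Units (ZR R)" unfolding c_def using lcU'
    proof (induction k)
      case 0 thus ?case using F.Units_one_closed by simp
    next
      case (Suc k) thus ?case using F.Units_m_closed by simp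
    qed
    have cC: "c \<in> center R" using cU FU by blast
    have qP: "q \<in> carrier (UP R)" and rP: "r \<in> carrier (UP R)" using q r CQ by blast+
    have hq: "h \<otimes>\<^bsub>UP (ZR R)\<^esub> q \<in> carrier (UP (ZR R))" using hQ q by simp
    have cg: "c \<odot>\<^bsub>UP (ZR R)\<^esub> g f \<in> carrier (UP (ZR R))" using cC gfQ by simp
    have r_eq: "r = \<ominus>\<^bsub>UP (ZR R)\<^esub> (h \<otimes>\<^bsub>UP (ZR R)\<^esub> q) \<oplus>\<^bsub>UP (ZR R)\<^esub> (c \<odot>\<^bsub>UP (ZR R)\<^esub> g f)"
    proof -
      have "\<ominus>\<^bsub>UP (ZR R)\<^esub> (h \<otimes>\<^bsub>UP (ZR R)\<^esub> q) \<oplus>\<^bsub>UP (ZR R)\<^esub> (c \<odot>\<^bsub>UP (ZR R)\<^esub> g f)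
          = \<ominus>\<^bsub>UP (ZR R)\<^esub> (h \<otimes>\<^bsub>UP (ZR R)\<^esub> q) \<oplus>\<^bsub>UP (ZR R)\<^esub> (h \<otimes>\<^bsub>UP (ZR R)\<^esub> q \<oplus>\<^bsub>UP (ZR R)\<^esub> r)"
        using eq c_def by simp
      also have "\<dots> = r" using hq r by (simp add: Q.P.a_assoc[symmetric] Q.P.l_neg)
      finally show ?thesis by simp
    qed
    have qh: "h \<otimes>\<^bsub>UP (ZR R)\<^esub> q = q \<otimes>\<^bsub>UP R\<^esub> h"
      using Q.P.m_comm[OF hQ q] UP_ZR_mult[OF Rr Ff q hQ] by simp
    have rP_eq: "r = (\<ominus>\<^bsub>UP R\<^esub> q) \<otimes>\<^bsub>UP R\<^esub> h \<oplus>\<^bsub>UP R\<^esub> (up_ring.monom (UP R) c 0 \<otimes>\<^bsub>UP R\<^esub> g f)"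
    proof -
      have "\<ominus>\<^bsub>UP (ZR R)\<^esub> (h \<otimes>\<^bsub>UP (ZR R)\<^esub> q) = \<ominus>\<^bsub>UP R\<^esub> (q \<otimes>\<^bsub>UP R\<^esub> h)"
        using UP_ZR_minus[OF Rr Ff hq] qh by simp
      also have "\<dots> = (\<ominus>\<^bsub>UP R\<^esub> q) \<otimes>\<^bsub>UP R\<^esub> h" using P.P.l_minus[OF qP hP] by simp
      finally have e1: "\<ominus>\<^bsub>UP (ZR R)\<^esub> (h \<otimes>\<^bsub>UP (ZR R)\<^esub> q) = (\<ominus>\<^bsub>UP R\<^esub> q) \<otimes>\<^bsub>UP R\<^esub> h" .
      have e2: "c \<odot>\<^bsub>UP (ZR R)\<^esub> g f = up_ring.monom (UP R) c 0 \<otimes>\<^bsub>UP R\<^esub> g f"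
        using UP_ZR_smult[OF cC gfQ] P.monom_mult_is_smult[of c "g f"] subsetD[OF center_sub cC] gfP by simp
      have mQ: "\<ominus>\<^bsub>UP (ZR R)\<^esub> (h \<otimes>\<^bsub>UP (ZR R)\<^esub> q) \<in> carrier (UP (ZR R))" using hq by simp
      show ?thesis using r_eq UP_ZR_add[OF mQ cg] e1 e2 by simp
    qed
    have rI: "r \<in> ?I"
    proof -
      have "(\<ominus>\<^bsub>UP R\<^esub> q) \<otimes>\<^bsub>UP R\<^esub> h \<in> ?I" using P.P.LG_lmult[OF fs_carrier _ hI] qP by simp
      moreover have "up_ring.monom (UP R) c 0 \<otimes>\<^bsub>UP R\<^esub> g f \<in> ?I"
        using P.P.LG_lmult[OF fs_carrier P.monom_closed[OF subsetD[OF center_sub cC]] gI[OF fs]] .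
      ultimately show ?thesis unfolding rP_eq by (rule P.P.LG_add[OF fs_carrier])
    qed
    have r0: "r = \<zero>\<^bsub>UP (ZR R)\<^esub>"
    proof (rule ccontr)
      assume rnz: "r \<noteq> \<zero>\<^bsub>UP (ZR R)\<^esub>"
      hence "r \<noteq> \<zero>\<^bsub>UP R\<^esub>" using UP_ZR_zero[of R] by simp
      hence "r \<in> D" unfolding D_def using rI r by simp
      hence "deg R h \<le> deg R r" by (rule hmin)
      moreover have "deg R r < deg R h" using rdeg rnz UP_ZR_deg[OF r] UP_ZR_deg[OF hQ] by simp
      ultimately show False by simp
    qed
    have cg_eq: "c \<odot>\<^bsub>UP (ZR R)\<^esub> g f = q \<otimes>\<^bsub>UP (ZR R)\<^esub> h"
    proof -
      have "c \<odot>\<^bsub>UP (ZR R)\<^esub> g f = h \<otimes>\<^bsub>UP (ZR R)\<^esub> q \<oplus>\<^bsub>UP (ZR R)\<^esub> \<zero>\<^bsub>UP (ZR R)\<^esub>"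
        using eq unfolding c_def r0 .
      also have "\<dots> = h \<otimes>\<^bsub>UP (ZR R)\<^esub> q" using Q.P.r_zero[OF hq] .
      also have "\<dots> = q \<otimes>\<^bsub>UP (ZR R)\<^esub> h" using Q.P.m_comm[OF hQ q] .
      finally show ?thesis .
    qed
    define ci where "ci = inv\<^bsub>ZR R\<^esub> c"
    have "ci \<in> Units (ZR R)" unfolding ci_def using F.Units_inv_Units[OF cU] .
    hence ciC: "ci \<in> center R" using FU by blast
    have cic: "ci \<otimes>\<^bsub>R\<^esub> c = \<one>\<^bsub>R\<^esub>"
      using F.Units_l_inv[OF cU] unfolding ci_def by simp
    define w where "w = ci \<odot>\<^bsub>UP (ZR R)\<^esub> q"
    have wQ: "w \<in> carrier (UP (ZR R))" using w_def ciC q by simp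
    have "g f = ci \<odot>\<^bsub>UP (ZR R)\<^esub> (c \<odot>\<^bsub>UP (ZR R)\<^esub> g f)"
      using Q.UP_smult_assoc1[of ci c "g f"] ciC cC gfQ cic Q.UP_smult_one[OF gfQ] by simp
    also have "\<dots> = w \<otimes>\<^bsub>UP (ZR R)\<^esub> h"
      unfolding cg_eq w_def using Q.UP_smult_assoc2[of ci q h] ciC q hQ by simp
    also have "\<dots> = w \<otimes>\<^bsub>UP R\<^esub> h" using UP_ZR_mult[OF Rr Ff wQ hQ] .
    finally show ?thesis using wQ CQ by blast
  qed
  show False
  proof (cases "deg R h = 0")
    case True
    define h0 where "h0 = up_ring.coeff (UP R) h 0"
    have hm: "h = up_ring.monom (UP R) h0 0" using P.deg_zero_impl_monom[OF hP True] unfolding h0_def .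
    have hcen: "\<forall>n. h n \<in> center R" using hQ unfolding UP_ZR_carrier by blast
    have h0C: "h0 \<in> center R" unfolding h0_def coeff_UP_eq[OF hP] using hcen by blast
    have h0nz: "h0 \<noteq> \<zero>\<^bsub>R\<^esub>" using P.lcoeff_nonzero_nonzero[OF True hnz hP] unfolding h0_def .
    have h0U: "h0 \<in> Units (ZR R)" using h0C h0nz FU by simp
    define hi where "hi = inv\<^bsub>ZR R\<^esub> h0"
    have "hi \<in> Units (ZR R)" unfolding hi_def using F.Units_inv_Units[OF h0U] .
    hence hiC: "hi \<in> center R" using FU by blast
    have hih: "hi \<otimes>\<^bsub>R\<^esub> h0 = \<one>\<^bsub>R\<^esub>"
      using F.Units_l_inv[OF h0U] unfolding hi_def by simp
    have hiR: "hi \<in> carrier R" using subsetD[OF center_sub hiC] .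
    have h0R: "h0 \<in> carrier R" using subsetD[OF center_sub h0C] .
    have "up_ring.monom (UP R) hi 0 \<otimes>\<^bsub>UP R\<^esub> h = up_ring.monom (UP R) (hi \<otimes>\<^bsub>R\<^esub> h0) (0 + 0)"
      unfolding hm using P.monom_mult[OF hiR h0R, of 0 0] by simp
    also have "\<dots> = \<one>\<^bsub>UP R\<^esub>" using hih P.monom_one by simp
    finally have oneE: "up_ring.monom (UP R) hi 0 \<otimes>\<^bsub>UP R\<^esub> h = \<one>\<^bsub>UP R\<^esub>" .
    have oneI: "\<one>\<^bsub>UP R\<^esub> \<in> ?I" using P.P.LG_lmult[OF fs_carrier P.monom_closed[OF hiR, of 0] hI] unfolding oneE .
    have "carrier (UP R) \<subseteq> ?I"
    proof
      fix b assume b: "b \<in> carrier (UP R)"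
      have "b \<otimes>\<^bsub>UP R\<^esub> \<one>\<^bsub>UP R\<^esub> \<in> ?I" using P.P.LG_lmult[OF fs_carrier b oneI] .
      thus "b \<in> ?I" unfolding P.P.r_one[OF b] .
    qed
    thus False using neq Isub by blast
  next
    case False
    have dF: "deg (ZR R) h > 0" using False UP_ZR_deg[OF hQ] by simp
    obtain lam where lamC: "lam \<in> carrier (ZR R)" and ev: "UnivPoly.eval (ZR R) (ZR R) id lam h = \<zero>\<^bsub>ZR R\<^esub>"
      using F.root_exists[OF hQ dF] by blast
    have lamc: "lam \<in> center R" using lamC by simp
    have lamR: "lam \<in> carrier R" using subsetD[OF center_sub lamc] .
    have nt: "carrier (ZR R) \<noteq> {\<zero>\<^bsub>ZR R\<^esub>}" using F.one_closed F.one_not_zero by blast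
    obtain q r where q: "q \<in> carrier (UP (ZR R))" and hr: "h = (up_ring.monom (UP (ZR R)) \<one>\<^bsub>ZR R\<^esub> 1 \<ominus>\<^bsub>UP (ZR R)\<^esub> up_ring.monom (UP (ZR R)) lam 0) \<otimes>\<^bsub>UP (ZR R)\<^esub> q \<oplus>\<^bsub>UP (ZR R)\<^esub> up_ring.monom (UP (ZR R)) (UnivPoly.eval (ZR R) (ZR R) id lam h) 0"
      using Q.remainder_theorem[OF hQ lamC nt] by blast
    define XQl where "XQl = up_ring.monom (UP (ZR R)) \<one>\<^bsub>ZR R\<^esub> 1 \<ominus>\<^bsub>UP (ZR R)\<^esub> up_ring.monom (UP (ZR R)) lam 0"
    define Xl where "Xl = up_ring.monom (UP R) \<one>\<^bsub>R\<^esub> 1 \<ominus>\<^bsub>UP R\<^esub> up_ring.monom (UP R) lam 0"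
    have XQlc: "XQl \<in> carrier (UP (ZR R))" unfolding XQl_def by (intro Q.P.minus_closed Q.monom_closed F.one_closed lamC)
    have XQXe: "XQl = Xl"
    proof -
      have oc: "\<one>\<^bsub>R\<^esub> \<in> center R" using F.one_closed by simp
      have m1: "up_ring.monom (UP (ZR R)) lam 0 \<in> carrier (UP (ZR R))" using lamC by simp
      have m2: "up_ring.monom (UP (ZR R)) \<one>\<^bsub>ZR R\<^esub> 1 \<in> carrier (UP (ZR R))" by (intro Q.monom_closed F.one_closed)
      have m3: "\<ominus>\<^bsub>UP (ZR R)\<^esub> up_ring.monom (UP (ZR R)) lam 0 \<in> carrier (UP (ZR R))" using m1 by simp
      have "XQl = up_ring.monom (UP (ZR R)) \<one>\<^bsub>ZR R\<^esub> 1 \<oplus>\<^bsub>UP (ZR R)\<^esub> \<ominus>\<^bsub>UP (ZR R)\<^esub> up_ring.monom (UP (ZR R)) lam 0"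
        unfolding XQl_def a_minus_def ..
      also have "\<dots> = up_ring.monom (UP (ZR R)) \<one>\<^bsub>ZR R\<^esub> 1 \<oplus>\<^bsub>UP R\<^esub> \<ominus>\<^bsub>UP (ZR R)\<^esub> up_ring.monom (UP (ZR R)) lam 0"
        using UP_ZR_add[OF m2 m3] .
      also have "\<dots> = up_ring.monom (UP R) \<one>\<^bsub>R\<^esub> 1 \<oplus>\<^bsub>UP R\<^esub> \<ominus>\<^bsub>UP R\<^esub> up_ring.monom (UP R) lam 0"
        using UP_ZR_minus[OF Rr Ff m1] UP_ZR_monom[OF lamc, of 0] UP_ZR_monom[OF oc, of 1] by simp
      also have "\<dots> = Xl" unfolding Xl_def a_minus_def ..
      finally show ?thesis .
    qed
    have hXl: "h = q \<otimes>\<^bsub>UP R\<^esub> Xl"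
    proof -
      have "h = XQl \<otimes>\<^bsub>UP (ZR R)\<^esub> q \<oplus>\<^bsub>UP (ZR R)\<^esub> \<zero>\<^bsub>UP (ZR R)\<^esub>"
        using hr ev Q.monom_zero unfolding XQl_def by simp
      also have "\<dots> = XQl \<otimes>\<^bsub>UP (ZR R)\<^esub> q" using XQlc q by simp
      also have "\<dots> = q \<otimes>\<^bsub>UP (ZR R)\<^esub> XQl" using Q.P.m_comm[OF XQlc q] .
      also have "\<dots> = q \<otimes>\<^bsub>UP R\<^esub> XQl" using UP_ZR_mult[OF Rr Ff q XQlc] .
      finally show ?thesis unfolding XQXe .
    qed
    have XlP: "Xl \<in> carrier (UP R)" unfolding Xl_def using lamR by simp
    have qP: "q \<in> carrier (UP R)" using q CQ by blast
    have Jid: "ideal (root_ideal R lam) (UP R)" unfolding root_ideal_def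
      using P.P.genideal_ideal XlP unfolding Xl_def by simp
    have XlJ: "Xl \<in> root_ideal R lam" unfolding root_ideal_def Xl_def
      using P.P.genideal_self' XlP unfolding Xl_def by simp
    have hJ: "h \<in> root_ideal R lam" unfolding hXl using ideal.I_l_closed[OF Jid XlJ qP] .
    have "set fs \<subseteq> root_ideal R lam"
    proof
      fix f assume fs: "f \<in> set fs"
      obtain w where w: "w \<in> carrier (UP R)" and gw: "g f = w \<otimes>\<^bsub>UP R\<^esub> h" using hdiv[OF fs] by blast
      have "g f \<in> root_ideal R lam" unfolding gw using ideal.I_l_closed[OF Jid hJ w] .
      moreover have "up_ring.monom (UP R) (lc f) 0 \<in> carrier (UP R)"
        using R.Units_closed[OF lcU[OF fs]] by simp
      ultimately have "up_ring.monom (UP R) (lc f) 0 \<otimes>\<^bsub>UP R\<^esub> g f \<in> root_ideal R lam"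
        using ideal.I_l_closed[OF Jid] by blast
      thus "f \<in> root_ideal R lam" using gf[OF fs] by simp
    qed
    hence "lam \<in> zero_set R ?I" using zs[OF lamR] by blast
    thus False using V_empty by simp
  qed
qed


end
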